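(* For every $n\geq 1$, the Fibonacci-sum set-graph $G^F_{A^{(n)}}$ is Hamiltonian.
   Context: Let $\mathcal{F}=\{f_m\}_{m\ge 0}$ be the Fibonacci numbers, $f_0=0$, $f_1=1$, $f_m=f_{m-1}+f_{m-2}$. For $n\in\mathbb{N}$ let $A^{(n)}=\{1,2,\dots,n\}$. The Fibonacci-sum set-graph $G^F_{A^{(n)}}$ is the multigraph (loops and multiple edges allowed) whose vertices are in bijection with the nonempty subsets of $A^{(n)}$; between the vertices corresponding to distinct subsets $S,T$ there is one edge for each pair $(i',j')$ with $i'\in S$, $j'\in T$, $i'\neq j'$ and $i'+j'\in\mathcal{F}$, and at the vertex corresponding to $S$ there is one loop for each pair of distinct elements $i',j'\in S$ with $i'+j'\in\mathcal{F}$. *)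

theory Defs
  imports Main "HOL-Number_Theory.Fib"
begin

definition fib_numbers :: "nat set" where
  "fib_numbers = range fib"

definition fsg_vertices :: "nat \<Rightarrow> nat set set" where
  "fsg_vertices n = {S. S \<subseteq> {1..n} \<and> S \<noteq> {}}"

definition fsg_edge_mult :: "nat set \<Rightarrow> nat set \<Rightarrow> nat" where
  "fsg_edge_mult S T = card {(i, j). i \<in> S \<and> j \<in> T \<and> i \<noteq> j \<and> i + j \<in> fib_numbers}"

text \<open>Number of loops at S: one for each (unordered) pair of distinct elements of S with
  Fibonacci sum. Loops are irrelevant for Hamiltonicity; recorded for completeness.\<close>
definition fsg_loops :: "nat set \<Rightarrow> nat" where
  "fsg_loops S = card {{i, j} | i j. i \<in> S \<and> j \<in> S \<and> i \<noteq> j \<and> i + j \<in> fib_numbers}"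

text \<open>A cycle of length k \<ge> 3
  needs an edge between cyclically consecutive vertices; a cycle on 2 vertices uses two
  distinct parallel edges; the one-vertex graph is Hamiltonian by convention (trivial cycle).\<close>
definition hamiltonian_multigraph :: "'v set \<Rightarrow> ('v \<Rightarrow> 'v \<Rightarrow> nat) \<Rightarrow> bool" where
  "hamiltonian_multigraph V m \<longleftrightarrow>
     (\<exists>vs. distinct vs \<and> set vs = V \<and>
        (length vs = 1 \<or>
         (length vs = 2 \<and> m (vs ! 0) (vs ! 1) \<ge> 2) \<or>
         (length vs \<ge> 3 \<and> (\<forall>i < length vs. m (vs ! i) (vs ! ((i + 1) mod length vs)) \<ge> 1))))"

end

theory Submission
  imports Defs
begin

lemma fib_big: "k < fib (k + 2)"
proof (induction k)
  case 0 then show ?case by simp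
next
  case (Suc k)
  have "fib (Suc k + 2) = fib (k + 2) + fib (k+1)"
    by (simp add: numeral_2_eq_2)
  moreover have "fib (k+1) > 0" by (simp add: fib_neq_0_nat)
  ultimately show ?case using Suc by simp
qed

lemma partner:
  assumes "k \<ge> (3::nat)"
  shows "\<exists>p. 0 < p \<and> p < k \<and> p + k \<in> fib_numbers"
proof -
  define m where "m = (LEAST m. k < fib m)"
  have km: "k < fib m" unfolding m_def by (rule LeastI[of _ "k+2"]) (rule fib_big)
  have f4: "fib 4 = 3" by (simp add: numeral_eq_Suc)
  have "m > 4"
  proof (rule ccontr)
    assume "\<not> m > 4"
    then have "fib m \<le> fib 4" by (intro fib_mono) simp
    with km f4 assms show False by simp
  qed
  then obtain j where j: "m = Suc (Suc j)" "j \<ge> 3"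
    by (intro that[of "m - 2"]) auto
  have "\<not> k < fib (Suc j)" unfolding m_def
    by (rule not_less_Least) (simp add: j m_def[symmetric])
  then have le: "fib (Suc j) \<le> k" by simp
  have fm: "fib m = fib (Suc j) + fib j" using j by simp
  obtain i where i: "j = Suc (Suc i)" using j by (intro that[of "j - 2"]) auto
  have "fib (Suc j) = fib j + fib (Suc i)" using i by simp
  moreover have "fib (Suc i) > 0" by (simp add: fib_neq_0_nat)
  ultimately have "fib j < fib (Suc j)" by simp
  then have "fib m < 2 * k" using fm le by simp
  then show ?thesis using km
    by (intro exI[of _ "fib m - k"]) (auto simp: fib_numbers_def)
qed

definition adj :: "nat set \<Rightarrow> nat set \<Rightarrow> bool" where
  "adj S T \<longleftrightarrow> (\<exists>i\<in>S. \<exists>j\<in>T. i \<noteq> j \<and> i + j \<in> fib_numbers)"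

lemma adj_mono: "adj S T \<Longrightarrow> S \<subseteq> S' \<Longrightarrow> T \<subseteq> T' \<Longrightarrow> adj S' T'"
  unfolding adj_def by blast

lemma adj_mult: assumes "finite S" "finite T" "adj S T" shows "fsg_edge_mult S T \<ge> 1"
proof -
  have "{(i, j). i \<in> S \<and> j \<in> T \<and> i \<noteq> j \<and> i + j \<in> fib_numbers} \<subseteq> S \<times> T" by auto
  then have "finite {(i, j). i \<in> S \<and> j \<in> T \<and> i \<noteq> j \<and> i + j \<in> fib_numbers}"
    using assms finite_subset by blast
  moreover have "{(i, j). i \<in> S \<and> j \<in> T \<and> i \<noteq> j \<and> i + j \<in> fib_numbers} \<noteq> {}"
    using assms(3) unfolding adj_def by auto
  ultimately show ?thesis unfolding fsg_edge_mult_def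
    by (simp add: Suc_le_eq card_gt_0_iff)
qed

definition cyc :: "nat set list \<Rightarrow> bool" where
  "cyc vs \<longleftrightarrow> vs \<noteq> [] \<and> successively adj vs \<and> adj (last vs) (hd vs)"

lemma count_bound:
  assumes "successively (\<lambda>a b. \<not> (Q a \<and> Q b)) xs"
  shows "2 * length (filter Q xs) \<le> length xs + 1 \<and>
         (xs \<noteq> [] \<longrightarrow> \<not> Q (hd xs) \<longrightarrow> 2 * length (filter Q xs) \<le> length xs)"
  using assms
proof (induction xs)
  case Nil then show ?case by simp
next
  case (Cons a t)
  then have IH: "2 * length (filter Q t) \<le> length t + 1 \<and>
         (t \<noteq> [] \<longrightarrow> \<not> Q (hd t) \<longrightarrow> 2 * length (filter Q t) \<le> length t)"
    by (cases "t = []") (auto simp: successively_Cons)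
  show ?case
  proof (cases "Q a")
    case True
    show ?thesis
    proof (cases t)
      case Nil then show ?thesis using True by simp
    next
      case (Cons b u)
      then have "\<not> Q b" using True Cons.prems by simp
      then show ?thesis using IH True Cons by simp
    qed
  next
    case False then show ?thesis using IH by simp
  qed
qed

lemma not_succ_split:
  "\<not> successively R xs \<Longrightarrow> \<exists>ys a b zs. xs = ys @ a # b # zs \<and> \<not> R a b"
proof (induction R xs rule: successively.induct)
  case (3 P x y xs)
  show ?case
  proof (cases "P x y")
    case True
    then obtain ys a b zs where "y # xs = ys @ a # b # zs" "\<not> P a b" using 3 by auto
    then show ?thesis by (intro exI[of _ "x # ys"]) auto
  next
    case False then show ?thesis by (intro exI[of _ "[]"]) auto
  qed
qed auto

lemma pigeon:
  assumes "cyc vs" "distinct vs" "length vs < 2 * length (filter Q vs)"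
  shows "\<exists>ws. cyc ws \<and> distinct ws \<and> set ws = set vs \<and> Q (hd ws) \<and> Q (last ws)"
proof (cases "Q (hd vs) \<and> Q (last vs)")
  case True then show ?thesis using assms by blast
next
  case False
  have "\<not> successively (\<lambda>a b. \<not> (Q a \<and> Q b)) vs"
  proof
    assume s: "successively (\<lambda>a b. \<not> (Q a \<and> Q b)) vs"
    have ne: "vs \<noteq> []" using assms(1) cyc_def by simp
    show False
    proof (cases "Q (hd vs)")
      case False then show False using count_bound[OF s] ne assms(3) by simp
    next
      case True
      then have nl: "\<not> Q (last vs)" using \<open>\<not> (Q (hd vs) \<and> Q (last vs))\<close> by simp
      have s': "successively (\<lambda>a b. \<not> (Q a \<and> Q b)) (rev vs)"
        by (simp, rule successively_mono[OF s]) auto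
      have "hd (rev vs) = last vs" using ne by (simp add: hd_rev)
      then show False using count_bound[OF s'] ne assms(3) nl by (simp add: rev_filter[symmetric])
    qed
  qed
  then obtain ys a b zs where sp: "vs = ys @ a # b # zs" "Q a" "Q b"
    using not_succ_split by blast
  define ws where "ws = (b # zs) @ (ys @ [a])"
  have sv: "successively adj vs" "adj (last vs) (hd vs)" using assms(1) cyc_def by auto
  have s1: "successively adj (b # zs)" "successively adj (ys @ [a])" "adj a b"
    using sv(1) unfolding sp(1) by (auto simp: successively_append_iff)
  have "adj (last (b # zs)) (hd (ys @ [a]))" using sv(2) unfolding sp(1) by (cases ys) auto
  then have "successively adj ((b # zs) @ (ys @ [a]))"
    using successively_append_iff[of adj "b # zs" "ys @ [a]"] s1 by blast
  moreover have "last ws = a" "hd ws = b" unfolding ws_def by auto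
  ultimately have "cyc ws" unfolding cyc_def using s1 ws_def by auto
  moreover have "distinct ws" "set ws = set vs" using assms(2) unfolding ws_def sp(1) by auto
  ultimately show ?thesis using sp unfolding ws_def by auto
qed

lemma count_V:
  assumes "p \<in> {1..n}"
  shows "card (fsg_vertices n) < 2 * card {X \<in> fsg_vertices n. p \<in> X}"
proof -
  define A where "A = {X. X \<subseteq> {1..n} \<and> p \<in> X}"
  define B where "B = {X. X \<subseteq> {1..n} \<and> p \<notin> X}"
  have fB: "finite B" unfolding B_def by (rule finite_subset[of _ "Pow {1..n}"]) auto
  have fA: "finite A" unfolding A_def by (rule finite_subset[of _ "Pow {1..n}"]) auto
  have AB: "A = insert p ` B" unfolding A_def B_def using assms
  proof (intro equalityI subsetI)
    fix X assume "X \<in> {X. X \<subseteq> {1..n} \<and> p \<in> X}"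
    then show "X \<in> insert p ` {X. X \<subseteq> {1..n} \<and> p \<notin> X}"
      by (intro image_eqI[of _ _ "X - {p}"]) auto
  qed auto
  have "inj_on (insert p) B" unfolding B_def inj_on_def by (metis (mono_tags, lifting) Diff_insert_absorb mem_Collect_eq)
  then have cAB: "card A = card B" using AB card_image by metis
  have eA: "{X \<in> fsg_vertices n. p \<in> X} = A" unfolding A_def fsg_vertices_def by auto
  have eV: "fsg_vertices n = A \<union> (B - {{}})" unfolding A_def B_def fsg_vertices_def by auto
  have "{} \<in> B" unfolding B_def by auto
  then have cB: "card (B - {{}}) = card B - 1" using fB by simp
  have "card B \<ge> 1" using \<open>{} \<in> B\<close> fB by (metis One_nat_def Suc_leI card_gt_0_iff empty_iff)
  have "card (fsg_vertices n) = card A + card (B - {{}})"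
    unfolding eV by (rule card_Un_disjoint) (use fA fB in \<open>auto simp: A_def B_def\<close>)
  then show ?thesis using cB cAB eA \<open>card B \<ge> 1\<close> by simp
qed

lemma fin_V: "finite (fsg_vertices n)"
  unfolding fsg_vertices_def by (rule finite_subset[of _ "Pow {1..n}"]) auto

lemma sub_Suc: "Y \<subseteq> {1..Suc n} \<Longrightarrow> Suc n \<notin> Y \<Longrightarrow> Y \<subseteq> {1..(n::nat)}"
  by (auto simp: subset_iff le_Suc_eq)
lemma notin2: "X \<subseteq> {1..n} \<and> X \<noteq> {} \<Longrightarrow> X \<subseteq> {Suc n} \<Longrightarrow> False"
  by auto
lemma notin1: "X \<subseteq> {1..n} \<and> X \<noteq> {} \<Longrightarrow> Suc n \<in> X \<Longrightarrow> False" by auto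
lemma notin1': "X \<subseteq> {1..n} \<and> X \<noteq> {} \<Longrightarrow> {Suc n} \<subseteq> X \<Longrightarrow> False" by auto
lemma inj_ins: "inj_on (insert (Suc n)) {X. X \<subseteq> {1..n}}" unfolding inj_on_def
  by (metis Diff_insert_absorb atLeastAtMost_iff mem_Collect_eq not_less_eq_eq order_refl subsetD)

lemma step:
  assumes n: "n \<ge> 2" and c: "cyc vs" "distinct vs" "set vs = fsg_vertices n"
  shows "\<exists>us. cyc us \<and> distinct us \<and> set us = fsg_vertices (Suc n)"
proof -
  obtain p where p: "0 < p" "p < Suc n" "p + Suc n \<in> fib_numbers"
    using partner[of "Suc n"] n by auto
  have pn: "p \<in> {1..n}" using p by auto
  have "length (filter (\<lambda>X. p \<in> X) vs) = card {X \<in> fsg_vertices n. p \<in> X}"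
    using c(2,3) by (metis distinct_card distinct_filter set_filter)
  moreover have "length vs = card (fsg_vertices n)" using c(2,3) distinct_card by metis
  ultimately obtain ws where w: "cyc ws" "distinct ws" "set ws = fsg_vertices n"
      "p \<in> hd ws" "p \<in> last ws"
    using pigeon[OF c(1,2), of "\<lambda>X. p \<in> X"] count_V[OF pn] c(3) by auto
  have wne: "ws \<noteq> []" "successively adj ws" "adj (last ws) (hd ws)" using w(1) cyc_def by auto
  have sub: "\<And>X. X \<in> set ws \<Longrightarrow> X \<subseteq> {1..n} \<and> X \<noteq> {}" using w(3) fsg_vertices_def by auto
  define ms where "ms = map (insert (Suc n)) ws"
  define us where "us = ws @ ({Suc n} # ms)"
  have sm: "successively adj ms" unfolding ms_def successively_map
    by (rule successively_mono[OF wne(2)]) (auto intro: adj_mono)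
  have a1: "adj (last ws) {Suc n}" unfolding adj_def using w(5) p by (intro bexI[of _ p] bexI[of _ "Suc n"]) auto
  have pf: "Suc n + p \<in> fib_numbers" using p(3) by (simp add: ac_simps)
  have hm: "hd ms = insert (Suc n) (hd ws)" unfolding ms_def using wne(1) by (simp add: hd_map)
  have a2: "adj {Suc n} (hd ms)" unfolding adj_def hm
  proof (intro bexI conjI)
    show "Suc n \<noteq> p" "Suc n + p \<in> fib_numbers" "p \<in> insert (Suc n) (hd ws)" "Suc n \<in> {Suc n}"
      using p(2) pf w(4) by auto
  qed
  have "successively adj ({Suc n} # ms)" using sm a2 by (simp add: successively_Cons ms_def)
  then have "successively adj us" unfolding us_def
    using successively_append_iff[of adj ws "{Suc n} # ms"] wne a1 by auto
  moreover have "adj (last us) (hd us)"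
  proof -
    have "last us = insert (Suc n) (last ws)" "hd us = hd ws"
      unfolding us_def ms_def using wne(1) by (auto simp: last_map)
    then show ?thesis using wne(3) by (auto intro: adj_mono)
  qed
  ultimately have "cyc us" unfolding cyc_def us_def by auto
  moreover have "distinct us"
  proof -
    have "inj_on (insert (Suc n)) {X. X \<subseteq> {1..n}}" by (rule inj_ins)
    then have "inj_on (insert (Suc n)) (set ws)" by (rule inj_on_subset) (use sub in blast)
    then have "distinct ms" unfolding ms_def using w(2) by (simp add: distinct_map)
    moreover have "{Suc n} \<notin> set ws"
    proof
      assume "{Suc n} \<in> set ws"
      from sub[OF this] show False using notin1 by blast
    qed
    moreover have "{Suc n} \<notin> set ms"
    proof
      assume "{Suc n} \<in> set ms"
      then obtain X where X: "X \<in> set ws" "insert (Suc n) X = {Suc n}" by (auto simp: ms_def)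
      then have "X \<subseteq> {Suc n}" by blast
      with sub[OF X(1)] show False using notin2 by blast
    qed
    moreover have "set ws \<inter> set ms = {}"
    proof (rule ccontr)
      assume "set ws \<inter> set ms \<noteq> {}"
      then obtain X Y where "X \<in> set ws" "Y \<in> set ws" "X = insert (Suc n) Y" by (auto simp: ms_def)
      with sub[of X] show False using notin1 by blast
    qed
    ultimately show ?thesis unfolding us_def using w(2) by auto
  qed
  moreover have "set us = fsg_vertices (Suc n)"
  proof
    show "set us \<subseteq> fsg_vertices (Suc n)"
    proof
      fix Y assume "Y \<in> set us"
      then have "Y \<in> set ws \<or> Y = {Suc n} \<or> (\<exists>X \<in> set ws. Y = insert (Suc n) X)"
        unfolding us_def ms_def by auto
      then show "Y \<in> fsg_vertices (Suc n)"
      proof (elim disjE)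
        assume "Y \<in> set ws" then show ?thesis using sub[of Y] unfolding fsg_vertices_def by auto
      next
        assume "Y = {Suc n}" then show ?thesis unfolding fsg_vertices_def by auto
      next
        assume "\<exists>X \<in> set ws. Y = insert (Suc n) X"
        then obtain X where "X \<in> set ws" "Y = insert (Suc n) X" by blast
        then show ?thesis using sub[of X] unfolding fsg_vertices_def by auto
      qed
    qed
    show "fsg_vertices (Suc n) \<subseteq> set us"
    proof
      fix Y assume Y: "Y \<in> fsg_vertices (Suc n)"
      then have Y1: "Y \<subseteq> {1..Suc n}" "Y \<noteq> {}" unfolding fsg_vertices_def by auto
      show "Y \<in> set us"
      proof (cases "Suc n \<in> Y")
        case False
        then have "Y \<in> set ws" using Y1 w(3) sub_Suc[OF Y1(1)] unfolding fsg_vertices_def by auto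
        then show ?thesis unfolding us_def by simp
      next
        case True
        show ?thesis
        proof (cases "Y = {Suc n}")
          case True then show ?thesis unfolding us_def by simp
        next
          case False
          have "Y - {Suc n} \<subseteq> {1..Suc n}" "Suc n \<notin> Y - {Suc n}" using Y1 by auto
          then have "Y - {Suc n} \<subseteq> {1..n}" by (rule sub_Suc)
          moreover have "Y - {Suc n} \<noteq> {}" using False True by auto
          ultimately have "Y - {Suc n} \<in> set ws" using w(3) unfolding fsg_vertices_def by auto
          moreover have "Y = insert (Suc n) (Y - {Suc n})" using True by auto
          ultimately have "Y \<in> set ms" unfolding ms_def by (metis image_eqI list.set_map)
          then show ?thesis unfolding us_def by simp
        qed
      qed
    qed
  qed
  ultimately show ?thesis by blast
qed


lemma V2: "fsg_vertices 2 = {{1},{2},{1,2}}"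
proof -
  have e: "{1..2::nat} = {1,2}" by auto
  have "Pow {1,2::nat} = {{},{1},{2},{1,2}}" by (auto simp: Pow_insert)
  then show ?thesis unfolding fsg_vertices_def e by (auto simp: Pow_def)
qed

lemma fib3: "(3::nat) \<in> fib_numbers"
proof -
  have "fib 4 = 3" by (simp add: numeral_eq_Suc)
  then show ?thesis unfolding fib_numbers_def by (metis rangeI)
qed

lemma main: "n \<ge> 2 \<Longrightarrow> \<exists>vs. cyc vs \<and> distinct vs \<and> set vs = fsg_vertices n"
proof (induction n rule: nat_induct_at_least)
  case base
  have a: "adj {1} {2}" "adj {2} {1,2}" "adj {1,2} {1}" unfolding adj_def using fib3 by (auto simp: numeral_3_eq_3[symmetric])
  have "cyc [{1},{2},{1,2}]" unfolding cyc_def using a by simp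
  moreover have "distinct [{1::nat},{2},{1,2}]" by auto
  ultimately show ?case using V2 by (intro exI[of _ "[{1},{2},{1,2}]"]) auto
next
  case (Suc n) then show ?case using step by blast
qed

theorem corollary2p3:
  fixes n :: nat
  assumes "n \<ge> 1"
  shows "hamiltonian_multigraph (fsg_vertices n) fsg_edge_mult"
proof (cases "n = 1")
  case True
  have "fsg_vertices 1 = {{1}}" unfolding fsg_vertices_def by auto
  then show ?thesis unfolding hamiltonian_multigraph_def True
    by (intro exI[of _ "[{1}]"]) auto
next
  case False
  then have n2: "n \<ge> 2" using assms by simp
  obtain vs where v: "cyc vs" "distinct vs" "set vs = fsg_vertices n" using main[OF n2] by blast
  have "{{1},{2},{1,2}} \<subseteq> fsg_vertices n" unfolding fsg_vertices_def using n2 by auto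
  then have "card {{1::nat},{2},{1,2}} \<le> card (fsg_vertices n)" using fin_V by (rule card_mono[rotated])
  moreover have "card {{1::nat},{2},{1,2}} = 3" by auto
  moreover have "length vs = card (fsg_vertices n)" using v distinct_card by metis
  ultimately have L: "length vs \<ge> 3" by simp
  have fin: "\<And>X. X \<in> set vs \<Longrightarrow> finite X" using v(3) unfolding fsg_vertices_def
    by (auto intro: finite_subset)
  have "\<forall>i < length vs. fsg_edge_mult (vs ! i) (vs ! ((i + 1) mod length vs)) \<ge> 1"
  proof (intro allI impI)
    fix i assume i: "i < length vs"
    have "adj (vs ! i) (vs ! ((i + 1) mod length vs))"
    proof (cases "Suc i < length vs")
      case True
      then show ?thesis using successively_nth[of adj vs i] v(1) unfolding cyc_def by simp
    next
      case False
      then have "i = length vs - 1" using i by auto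
      moreover have "i + 1 = length vs" using False i by auto
      then have "(i + 1) mod length vs = 0" by simp
      ultimately show ?thesis using v(1) unfolding cyc_def by (metis One_nat_def hd_conv_nth last_conv_nth)
    qed
    moreover have "vs ! i \<in> set vs" "vs ! ((i + 1) mod length vs) \<in> set vs"
      using i L by (auto intro!: nth_mem mod_less_divisor)
    ultimately show "fsg_edge_mult (vs ! i) (vs ! ((i + 1) mod length vs)) \<ge> 1"
      using adj_mult fin by blast
  qed
  then show ?thesis unfolding hamiltonian_multigraph_def using v L by blast
qed

end
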